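(* Almost surely, $$\lim_{n\to\infty}\frac{Z_n-\mathbb{E}[Z_n]}{n}=0,\qquad \lim_{n\to\infty}\frac{\mathbb{E}[Z_n]}{n}=\frac{\tau}{1-\gamma},$$ so that $\frac{Z_n}{n}\to\frac{\tau}{1-\gamma}$ almost surely.
   Context: Fix $p,q,r\ge 0$ with $p+q+r=1$ and $\theta\in[0,1)$. Let $(X_n)_{n\ge1}$ be random variables with values in $\{-1,0,+1\}$ such that $\mathbb{P}(X_1=+1)=p$, $\mathbb{P}(X_1=-1)=q$, $\mathbb{P}(X_1=0)=r$. Let $\mathcal F_n=\sigma(X_1,\dots,X_n)$. For $n\ge1$ let $n_+,n_-,n_0$ denote the number of indices $i\in\{1,\dots,n\}$ with $X_i=+1$, $X_i=-1$, $X_i=0$ respectively. The conditional law of $X_{n+1}$ is $\mathbb{P}(X_{n+1}=+1\mid\mathcal F_n)=\theta\big(\tfrac{n_+}{n}p+\tfrac{n_-}{n}q\big)+(1-\theta)p$, $\mathbb{P}(X_{n+1}=-1\mid\mathcal F_n)=\theta\big(\tfrac{n_-}{n}p+\tfrac{n_+}{n}q\big)+(1-\theta)q$, $\mathbb{P}(X_{n+1}=0\mid\mathcal F_n)=\theta(p+q)\tfrac{n_0}{n}+r$. Let $Z_n=\sum_{i=1}^n X_i^2$. Notation: $\tau=(1-\theta)(p+q)$, $\gamma=(p+q)\theta$. *)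

theory Defs
  imports "HOL-Probability.Probability"
begin

definition nat_filtration :: "'a measure \<Rightarrow> (nat \<Rightarrow> 'a \<Rightarrow> int) \<Rightarrow> nat \<Rightarrow> 'a measure" where
  "nat_filtration M X n =
     sigma (space M) {X i -` A \<inter> space M | i A. i \<in> {1..n}}"

definition cnt :: "(nat \<Rightarrow> 'a \<Rightarrow> int) \<Rightarrow> int \<Rightarrow> nat \<Rightarrow> 'a \<Rightarrow> nat" where
  "cnt X v n \<omega> = card {i \<in> {1..n}. X i \<omega> = v}"

definition Zsum :: "(nat \<Rightarrow> 'a \<Rightarrow> int) \<Rightarrow> nat \<Rightarrow> 'a \<Rightarrow> real" where
  "Zsum X n \<omega> = (\<Sum>i=1..n. (real_of_int (X i \<omega>))\<^sup>2)"

end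

theory Submission
  imports Defs "HOL-Probability.Probability"
begin


lemma det_v:
  fixes v T :: "nat \<Rightarrow> real" and c :: real
  assumes c: "0 < c" "c \<le> 1" and T: "T \<longlonglongrightarrow> 0"
    and rec: "\<And>n. n \<ge> Nz \<Longrightarrow> v (Suc n) = (1 - c / (real n + 1)) * v n + c / (real n + 1) * T n"
  shows "v \<longlonglongrightarrow> 0"
proof (rule LIMSEQ_I)
  fix e :: real assume e: "0 < e"
  define \<epsilon> where "\<epsilon> = e / 2"
  have \<epsilon>: "\<epsilon> > 0" using e by (simp add: \<epsilon>_def)
  from T \<epsilon> have "\<forall>\<^sub>F n in sequentially. dist (T n) 0 < \<epsilon>"
    by (rule tendstoD)
  then obtain N1 where N1: "\<And>n. n \<ge> N1 \<Longrightarrow> \<bar>T n\<bar> < \<epsilon>" by (auto simp: eventually_sequentially dist_real_def)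
  define N where "N = max Nz N1"
  define u where "u n = max (\<bar>v n\<bar> - \<epsilon>) 0" for n
  have u_nn: "u n \<ge> 0" for n by (simp add: u_def)
  have ustep: "u (Suc n) \<le> (1 - c / (real n + 1)) * u n" if "n \<ge> N" for n
  proof -
    define a where "a = c / (real n + 1)"
    have a: "0 \<le> a" "a \<le> 1" using c by (auto simp: a_def field_simps)
    have "\<bar>v (Suc n)\<bar> \<le> (1 - a) * \<bar>v n\<bar> + a * \<bar>T n\<bar>"
    proof -
      have "v (Suc n) = (1 - a) * v n + a * T n" using rec[of n] that by (simp add: a_def N_def)
      then have "\<bar>v (Suc n)\<bar> \<le> \<bar>(1 - a) * v n\<bar> + \<bar>a * T n\<bar>" by simp
      also have "\<dots> = (1 - a) * \<bar>v n\<bar> + a * \<bar>T n\<bar>" using a by (simp add: abs_mult)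
      finally show ?thesis .
    qed
    also have "\<dots> \<le> (1 - a) * \<bar>v n\<bar> + a * \<epsilon>"
      using N1[of n] that a by (intro add_left_mono mult_left_mono) (auto simp: N_def)
    finally have "\<bar>v (Suc n)\<bar> - \<epsilon> \<le> (1 - a) * (\<bar>v n\<bar> - \<epsilon>)" by (simp add: algebra_simps)
    also have "\<dots> \<le> (1 - a) * u n" using a by (intro mult_left_mono) (auto simp: u_def)
    finally show ?thesis using a u_nn[of n] unfolding u_def a_def[symmetric]
      by (simp add: mult_nonneg_nonneg)
  qed
  have ubound: "u n \<le> u N * exp (- c * (harm n - harm N))" if "n \<ge> N" for n
    using that
  proof (induction n rule: dec_induct)
    case base then show ?case by simp
  next
    case (step n)
    have "u (Suc n) \<le> (1 - c / (real n + 1)) * u n" using ustep step by simp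
    also have "\<dots> \<le> exp (- (c / (real n + 1))) * u n"
      using u_nn[of n] exp_ge_add_one_self[of "- (c / (real n + 1))"]
      by (intro mult_right_mono) auto
    also have "\<dots> \<le> exp (- (c / (real n + 1))) * (u N * exp (- c * (harm n - harm N)))"
      using step by (intro mult_left_mono) auto
    also have "\<dots> = u N * exp (- (c / (real n + 1)) + - c * (harm n - harm N))"
      by (simp only: exp_add mult_ac)
    also have "\<dots> = u N * exp (- c * (harm (Suc n) - harm N))"
      by (simp add: harm_Suc algebra_simps divide_inverse)
    finally show ?case .
  qed
  define K where "K = u N * exp (c * harm N)"
  have K: "K \<ge> 0" using u_nn by (simp add: K_def)
  have ub2: "u n \<le> K * (real n + 1) powr (- c)" if "n \<ge> N" for n
  proof -
    have "u n \<le> u N * exp (- c * (harm n - harm N))" using ubound that .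
    also have "\<dots> = K * exp (- c * harm n)" by (simp add: K_def exp_diff exp_minus right_diff_distrib divide_inverse)
    also have "\<dots> \<le> K * exp (- c * ln (real n + 1))"
      using ln_le_harm[of n] c K by (intro mult_left_mono) auto
    also have "\<dots> = K * (real n + 1) powr (- c)" by (simp add: powr_def)
    finally show ?thesis .
  qed
  have "(\<lambda>n. K * (real n + 1) powr (- c)) \<longlonglongrightarrow> K * 0"
    apply (intro tendsto_mult tendsto_const tendsto_neg_powr)
    using c apply simp
    using filterlim_tendsto_add_at_top[OF tendsto_const[of 1] filterlim_real_sequentially]
    by (simp add: add.commute)
  then have "\<forall>\<^sub>F n in sequentially. K * (real n + 1) powr (- c) < \<epsilon>"
    using \<epsilon> by (simp add: order_tendsto_iff)
  then obtain N2 where N2: "\<And>n. n \<ge> N2 \<Longrightarrow> K * (real n + 1) powr (- c) < \<epsilon>" by (auto simp: eventually_sequentially)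
  show "\<exists>no. \<forall>n\<ge>no. norm (v n - 0) < e"
  proof (intro exI allI impI)
    fix n assume "n \<ge> max N N2"
    then have "u n < \<epsilon>" using ub2[of n] N2[of n] by auto
    then show "norm (v n - 0) < e" unfolding u_def \<epsilon>_def by (simp add: max_def split: if_splits)
  qed
qed

lemma det_w:
  fixes w \<delta> :: "nat \<Rightarrow> real" and c P :: real
  assumes c: "0 < c" "c \<le> 1" and P: "(\<lambda>n. \<Sum>k=1..n. \<delta> k) \<longlonglongrightarrow> P"
    and rec: "\<And>n. n \<ge> Nz \<Longrightarrow> w (Suc n) = (1 - c / (real n + 1)) * w n + \<delta> (Suc n)"
  shows "w \<longlonglongrightarrow> 0"
proof -
  define T where "T n = P - (\<Sum>k=1..n. \<delta> k)" for n
  have T: "T \<longlonglongrightarrow> 0" unfolding T_def using tendsto_diff[OF tendsto_const[of P] P] by simp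
  define v where "v n = w n + T n" for n
  have "v \<longlonglongrightarrow> 0"
  proof (rule det_v[OF c T])
    fix n assume n: "n \<ge> Nz"
    have TS: "T (Suc n) = T n - \<delta> (Suc n)" by (simp add: T_def)
    show "v (Suc n) = (1 - c / (real n + 1)) * v n + c / (real n + 1) * T n"
      unfolding v_def TS rec[OF n] by (simp add: algebra_simps add_divide_distrib)
  qed
  then have "(\<lambda>n. v n - T n) \<longlonglongrightarrow> 0 - 0" by (intro tendsto_diff T)
  then show ?thesis by (simp add: v_def)
qed

lemma pow4_bound:
  fixes s :: real and n :: nat
  assumes "n \<ge> 1" "s ^ 4 < real n powr (7/2)"
  shows "\<bar>s\<bar> < real n powr (7/8)"
proof (rule ccontr)
  assume "\<not> ?thesis"
  then have "real n powr (7/8) \<le> \<bar>s\<bar>" by simp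
  then have "(real n powr (7/8)) ^ 4 \<le> \<bar>s\<bar> ^ 4" by (intro power_mono) auto
  also have "(real n powr (7/8)) ^ 4 = real n powr (7/2)" using assms(1) by (subst powr_power) auto
  finally show False using assms(2) by simp
qed

lemma sum_by_parts_eps:
  fixes e :: "nat \<Rightarrow> real"
  shows "(\<Sum>k=1..n. e k / real k) = (\<Sum>k=1..n. e k) / (real n + 1)
           + (\<Sum>k=1..n. (\<Sum>j=1..k. e j) / (real k * (real k + 1)))"
proof (induction n)
  case 0 then show ?case by simp
next
  case (Suc n)
  define A where "A = (\<Sum>k=1..n. e k)"
  define B where "B = (\<Sum>k=1..n. (\<Sum>j=1..k. e j) / (real k * (real k + 1)))"
  have eq: "A / (real n + 1) + e (Suc n) / (real n + 1) = (A + e (Suc n)) / (real n + 2) + (A + e (Suc n)) / ((real n + 1) * (real n + 2))"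
  proof -
    have h: "real n + 1 \<noteq> 0" "real n + 2 \<noteq> 0" by auto
    have "(A + e (Suc n)) / (real n + 2) + (A + e (Suc n)) / ((real n + 1) * (real n + 2))
        = (A + e (Suc n)) * ((real n + 1) + 1) / ((real n + 1) * (real n + 2))"
      using h by (simp add: divide_simps) (simp add: algebra_simps)
    also have "\<dots> = (A + e (Suc n)) / (real n + 1)" using h by (simp add: add.assoc)
    finally show ?thesis by (simp add: add_divide_distrib)
  qed
  have "(\<Sum>k=1..Suc n. e k / real k) = (\<Sum>k=1..n. e k / real k) + e (Suc n) / (real n + 1)" by simp
  also have "\<dots> = A / (real n + 1) + B + e (Suc n) / (real n + 1)"
    using Suc by (simp add: A_def B_def)
  also have "\<dots> = (A + e (Suc n)) / (real n + 2) + (B + (A + e (Suc n)) / ((real n + 1) * (real n + 2)))"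
    using eq by simp
  also have "\<dots> = (\<Sum>k=1..Suc n. e k) / (real (Suc n) + 1)
           + (\<Sum>k=1..Suc n. (\<Sum>j=1..k. e j) / (real k * (real k + 1)))"
    by (simp add: A_def B_def add_ac)
  finally show ?case .
qed

lemma eps_series_conv:
  fixes e :: "nat \<Rightarrow> real"
  assumes ev: "eventually (\<lambda>n. (\<Sum>k=1..n. e k) ^ 4 < real n powr (7/2)) sequentially"
  shows "convergent (\<lambda>n. \<Sum>k=1..n. e k / real k)"
proof -
  define S where "S n = (\<Sum>k=1..n. e k)" for n
  from ev obtain N where N: "\<And>n. n \<ge> N \<Longrightarrow> S n ^ 4 < real n powr (7/2)"
    by (auto simp: eventually_sequentially S_def)
  have Sb: "\<bar>S n\<bar> < real n powr (7/8)" if "n \<ge> max N 1" for n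
    using pow4_bound[of n "S n"] N[of n] that by auto
  define f where "f k = S k / (real k * (real k + 1))" for k
  have f0: "f 0 = 0" by (simp add: f_def)
  have sf: "summable f"
  proof (rule summable_comparison_test'[where N="max N 1"])
    show "summable (\<lambda>n. real n powr (- 9/8))" by (simp add: summable_real_powr_iff)
    fix n assume n: "n \<ge> max N 1"
    then have npos: "real n > 0" by auto
    have "norm (f n) = \<bar>S n\<bar> / (real n * (real n + 1))" by (simp add: f_def abs_mult)
    also have "\<dots> \<le> \<bar>S n\<bar> / (real n * real n)"
      using npos by (intro divide_left_mono mult_left_mono mult_pos_pos) auto
    also have "\<dots> \<le> real n powr (7/8) / (real n * real n)"
      using Sb[OF n] npos by (intro divide_right_mono) auto
    also have "\<dots> = real n powr (7/8 - 2)" using npos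
      by (simp only: powr_diff[of "real n"] powr_numeral[of "real n"]) (simp add: power2_eq_square)
    finally show "norm (f n) \<le> real n powr (- 9/8)" by simp
  qed
  have l1: "(\<lambda>n. \<Sum>k=1..n. f k) \<longlonglongrightarrow> suminf f"
  proof -
    have "(\<lambda>n. \<Sum>k\<le>n. f k) \<longlonglongrightarrow> suminf f" by (rule summable_LIMSEQ'[OF sf])
    moreover have "(\<Sum>k\<le>n. f k) = (\<Sum>k=1..n. f k)" for n
    proof -
      have "{..n} = insert 0 {1..n}" by auto
      then show ?thesis using f0 by simp
    qed
    ultimately show ?thesis by simp
  qed
  have l2: "(\<lambda>n. S n / (real n + 1)) \<longlonglongrightarrow> 0"
  proof (rule Lim_null_comparison[where g="\<lambda>n. real n powr (- 1/8)"])
    show "(\<lambda>n. real n powr (- 1/8)) \<longlonglongrightarrow> 0"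
      by (intro tendsto_neg_powr filterlim_real_sequentially) auto
    show "\<forall>\<^sub>F n in sequentially. norm (S n / (real n + 1)) \<le> real n powr (- 1/8)"
      unfolding eventually_sequentially
    proof (intro exI allI impI)
      fix n assume n: "n \<ge> max N 1"
      then have npos: "real n > 0" by auto
      have "norm (S n / (real n + 1)) = \<bar>S n\<bar> / (real n + 1)" by simp
      also have "\<dots> \<le> \<bar>S n\<bar> / real n" using npos by (intro divide_left_mono) auto
      also have "\<dots> \<le> real n powr (7/8) / real n" using Sb[OF n] npos by (intro divide_right_mono) auto
      also have "\<dots> = real n powr (7/8 - 1)" using npos by (simp only: powr_diff[of "real n"]) simp
      finally show "norm (S n / (real n + 1)) \<le> real n powr (- 1/8)" by simp
    qed
  qed
  have "(\<lambda>n. S n / (real n + 1) + (\<Sum>k=1..n. f k)) \<longlonglongrightarrow> 0 + suminf f"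
    by (intro tendsto_add l1 l2)
  then show ?thesis unfolding convergent_def
    using sum_by_parts_eps[of e] by (auto simp: S_def f_def)
qed



locale eleph = prob_space M for M :: "'a measure" +
  fixes X :: "nat \<Rightarrow> 'a \<Rightarrow> int" and p q r \<theta> :: real
  assumes p: "p \<ge> 0" and q: "q \<ge> 0" and r: "r \<ge> 0" and pqr: "p + q + r = 1"
    and th0: "0 \<le> \<theta>" and th1: "\<theta> < 1"
    and meas: "\<And>i. i \<ge> 1 \<Longrightarrow> X i \<in> M \<rightarrow>\<^sub>M count_space UNIV"
    and vals: "\<And>i \<omega>. i \<ge> 1 \<Longrightarrow> \<omega> \<in> space M \<Longrightarrow> X i \<omega> \<in> {-1, 0, 1}"
    and step_zero: "\<And>n. n \<ge> 1 \<Longrightarrow> AE \<omega> in M.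
        real_cond_exp M (nat_filtration M X n)
          (indicator {\<omega> \<in> space M. X (n + 1) \<omega> = 0}) \<omega>
        = \<theta> * (p + q) * (real (cnt X 0 n \<omega>) / real n) + r"
begin

definition "gam = (p + q) * \<theta>"
definition "tau = (1 - \<theta>) * (p + q)"
definition "Y k \<omega> = (real_of_int (X k \<omega>))\<^sup>2"
definition "gg k \<omega> = gam * Zsum X k \<omega> / real k + tau"
definition "eps k \<omega> = Y k \<omega> - gg (k - 1) \<omega>"
definition "S n \<omega> = (\<Sum>k=1..n. eps k \<omega>)"

abbreviation "F n \<equiv> nat_filtration M X n"

lemma gen_sub: "{X i -` A \<inter> space M | i A. i \<in> {1..n}} \<subseteq> Pow (space M)" by auto

lemma gen_sets: "{X i -` A \<inter> space M | i A. i \<in> {1..n}} \<subseteq> sets M"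
proof
  fix x assume "x \<in> {X i -` A \<inter> space M | i A. i \<in> {1..n}}"
  then obtain i A where "x = X i -` A \<inter> space M" "i \<in> {1..n}" by auto
  then show "x \<in> sets M" using meas[of i] by (auto intro: measurable_sets)
qed

lemma F_space: "space (F n) = space M"
  unfolding nat_filtration_def using gen_sub by (simp add: space_measure_of_conv)

lemma F_sets: "sets (F n) = sigma_sets (space M) {X i -` A \<inter> space M | i A. i \<in> {1..n}}"
  unfolding nat_filtration_def using gen_sub by (simp add: sets_measure_of)

lemma subalg: "subalgebra M (F n)"
  unfolding subalgebra_def F_space F_sets using gen_sets by (simp add: sets.sigma_sets_subset)

lemma X_F: "1 \<le> i \<Longrightarrow> i \<le> n \<Longrightarrow> X i \<in> F n \<rightarrow>\<^sub>M count_space UNIV"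
proof (rule measurableI)
  fix A assume "1 \<le> i" "i \<le> n"
  then have "X i -` A \<inter> space M \<in> {X i -` A \<inter> space M | i A. i \<in> {1..n}}" by auto
  then show "X i -` A \<inter> space (F n) \<in> sets (F n)" unfolding F_space F_sets by auto
qed simp

lemma fX_F: "1 \<le> i \<Longrightarrow> i \<le> n \<Longrightarrow> (\<lambda>\<omega>. (\<phi> :: int \<Rightarrow> real) (X i \<omega>)) \<in> borel_measurable (F n)"
  by (rule measurable_compose[OF X_F]) auto

lemma Z_F: "k \<le> n \<Longrightarrow> Zsum X k \<in> borel_measurable (F n)"
  unfolding Zsum_def[abs_def] by (intro borel_measurable_sum fX_F) auto

lemma eps_F: "1 \<le> k \<Longrightarrow> k \<le> n \<Longrightarrow> eps k \<in> borel_measurable (F n)"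
proof -
  assume k: "1 \<le> k" "k \<le> n"
  have [measurable]: "Zsum X (k - 1) \<in> borel_measurable (F n)" using k by (intro Z_F) auto
  have [measurable]: "Y k \<in> borel_measurable (F n)" unfolding Y_def[abs_def] using k by (intro fX_F)
  show ?thesis unfolding eps_def[abs_def] gg_def[abs_def] by measurable
qed

lemma S_F: "S n \<in> borel_measurable (F n)"
  unfolding S_def[abs_def] by (intro borel_measurable_sum eps_F) auto

lemma toM: "f \<in> borel_measurable (F n) \<Longrightarrow> f \<in> borel_measurable M"
  by (rule measurable_from_subalg[OF subalg])

lemma S_M[measurable]: "S n \<in> borel_measurable M" by (rule toM[OF S_F])
lemma Z_M[measurable]: "Zsum X n \<in> borel_measurable M" by (rule toM[OF Z_F[OF order.refl]])
lemma eps_M: "1 \<le> k \<Longrightarrow> eps k \<in> borel_measurable M" by (rule toM[OF eps_F[OF _ order.refl]])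

lemma Y01: "1 \<le> k \<Longrightarrow> \<omega> \<in> space M \<Longrightarrow> Y k \<omega> = (if X k \<omega> = 0 then 0 else 1)"
  using vals[of k \<omega>] by (auto simp: Y_def)

lemma Z_bounds: "\<omega> \<in> space M \<Longrightarrow> 0 \<le> Zsum X n \<omega> \<and> Zsum X n \<omega> \<le> real n"
proof -
  assume w: "\<omega> \<in> space M"
  have "Zsum X n \<omega> \<le> (\<Sum>i=1..n. 1)" unfolding Zsum_def
    using Y01[OF _ w] by (intro sum_mono) (auto simp: Y_def[symmetric])
  then show ?thesis by (simp add: Zsum_def sum_nonneg)
qed

lemma gam_tau: "0 \<le> gam" "gam < 1" "0 \<le> tau" "gam + tau = p + q" "p + q \<le> 1"
proof -
  show "0 \<le> gam" "0 \<le> tau" using p q th0 th1 by (auto simp: gam_def tau_def)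
  show "gam + tau = p + q" by (simp add: gam_def tau_def algebra_simps)
  show "p + q \<le> 1" using pqr r by simp
  have "(p + q) * \<theta> \<le> 1 * \<theta>" using \<open>p + q \<le> 1\<close> th0 by (intro mult_right_mono) auto
  then show "gam < 1" using th1 by (simp add: gam_def)
qed

lemma gg_bounds: "\<omega> \<in> space M \<Longrightarrow> 0 \<le> gg k \<omega> \<and> gg k \<omega> \<le> 1"
proof -
  assume w: "\<omega> \<in> space M"
  have z: "0 \<le> Zsum X k \<omega> / real k" "Zsum X k \<omega> / real k \<le> 1"
    using Z_bounds[OF w, of k] by (auto simp: divide_simps)
  have "gam * (Zsum X k \<omega> / real k) \<le> gam * 1" using z gam_tau by (intro mult_left_mono) auto
  moreover have "0 \<le> gam * (Zsum X k \<omega> / real k)" using z gam_tau by (intro mult_nonneg_nonneg) auto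
  moreover have "gg k \<omega> = gam * (Zsum X k \<omega> / real k) + tau" by (simp add: gg_def)
  ultimately show ?thesis using gam_tau by auto
qed

lemma eps_bound: "1 \<le> k \<Longrightarrow> \<omega> \<in> space M \<Longrightarrow> \<bar>eps k \<omega>\<bar> \<le> 1"
  using gg_bounds[of \<omega> "k - 1"] Y01[of k \<omega>] by (auto simp: eps_def)

lemma S_bound: "\<omega> \<in> space M \<Longrightarrow> \<bar>S n \<omega>\<bar> \<le> real n"
proof -
  assume w: "\<omega> \<in> space M"
  have "\<bar>S n \<omega>\<bar> \<le> (\<Sum>k=1..n. \<bar>eps k \<omega>\<bar>)" unfolding S_def by (rule sum_abs)
  also have "\<dots> \<le> (\<Sum>k=1..n. 1)" using eps_bound[OF _ w] by (intro sum_mono) auto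
  finally show ?thesis by simp
qed

lemma S_Suc: "S (Suc n) \<omega> = S n \<omega> + eps (Suc n) \<omega>" by (simp add: S_def)

lemma bint: "f \<in> borel_measurable M \<Longrightarrow> (\<And>\<omega>. \<omega> \<in> space M \<Longrightarrow> \<bar>f \<omega>\<bar> \<le> B) \<Longrightarrow> integrable M (f :: 'a \<Rightarrow> real)"
  by (rule integrable_const_bound[where B=B]) auto

lemma cnt0: "\<omega> \<in> space M \<Longrightarrow> real (cnt X 0 n \<omega>) = real n - Zsum X n \<omega>"
proof -
  assume w: "\<omega> \<in> space M"
  have "real (cnt X 0 n \<omega>) = (\<Sum>i\<in>{i \<in> {1..n}. X i \<omega> = 0}. 1)" unfolding cnt_def by (rule real_of_card)
  also have "\<dots> = (\<Sum>i=1..n. if X i \<omega> = 0 then 1 else 0)" by (rule sum.inter_filter) simp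
  also have "\<dots> = (\<Sum>i=1..n. 1 - Y i \<omega>)" using Y01[OF _ w] by (intro sum.cong) auto
  also have "\<dots> = real n - Zsum X n \<omega>" by (simp add: sum_subtractf Zsum_def Y_def)
  finally show ?thesis .
qed

lemma mart:
  assumes n: "n \<ge> 1" and hm: "h \<in> borel_measurable (F n)"
    and hb: "\<And>\<omega>. \<omega> \<in> space M \<Longrightarrow> \<bar>h \<omega>\<bar> \<le> B"
  shows "(\<integral>\<omega>. h \<omega> * eps (n + 1) \<omega> \<partial>M) = 0"
proof -
  interpret Fs: finite_measure_subalgebra M "F n" by unfold_locales (rule subalg)
  define I where "I = (indicator {\<omega> \<in> space M. X (n + 1) \<omega> = 0} :: 'a \<Rightarrow> real)"
  define G where "G \<omega> = gg n \<omega>" for \<omega>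
  have hM[measurable]: "h \<in> borel_measurable M" using toM[OF hm] .
  have Xm[measurable]: "X (n + 1) \<in> M \<rightarrow>\<^sub>M count_space UNIV" using meas by simp
  have IM[measurable]: "I \<in> borel_measurable M" unfolding I_def by measurable
  have GM[measurable]: "G \<in> borel_measurable M" unfolding G_def gg_def[abs_def] by measurable
  have Ib: "\<bar>I \<omega>\<bar> \<le> 1" for \<omega> by (simp add: I_def indicator_def)
  have Gb: "\<omega> \<in> space M \<Longrightarrow> \<bar>G \<omega>\<bar> \<le> 1" for \<omega> using gg_bounds[of \<omega> n] by (simp add: G_def)
  have int1: "integrable M (\<lambda>\<omega>. h \<omega> * I \<omega>)"
  proof (rule bint[where B=B])
    fix \<omega> assume w: "\<omega> \<in> space M"
    have "\<bar>h \<omega> * I \<omega>\<bar> \<le> B * 1" unfolding abs_mult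
      using hb[OF w] Ib[of \<omega>] by (intro mult_mono) auto
    then show "\<bar>h \<omega> * I \<omega>\<bar> \<le> B" by simp
  qed measurable
  have int2: "integrable M (\<lambda>\<omega>. h \<omega> * (1 - G \<omega>))"
  proof (rule bint[where B="2 * B"])
    fix \<omega> assume w: "\<omega> \<in> space M"
    have "\<bar>1 - G \<omega>\<bar> \<le> 2" using Gb[OF w] by auto
    then have "\<bar>h \<omega> * (1 - G \<omega>)\<bar> \<le> B * 2" unfolding abs_mult
      using hb[OF w] by (intro mult_mono) auto
    then show "\<bar>h \<omega> * (1 - G \<omega>)\<bar> \<le> 2 * B" by simp
  qed measurable
  have c: "(\<integral>\<omega>. h \<omega> * real_cond_exp M (F n) I \<omega> \<partial>M) = (\<integral>\<omega>. h \<omega> * I \<omega> \<partial>M)"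
    by (rule Fs.real_cond_exp_intg(2)[OF int1 hm IM])
  have ae: "AE \<omega> in M. h \<omega> * real_cond_exp M (F n) I \<omega> = h \<omega> * (1 - G \<omega>)"
    using step_zero[OF n] AE_space
  proof eventually_elim
    case (elim \<omega>)
    have nz: "real n \<noteq> 0" using n by simp
    have "\<theta> * (p + q) * (real (cnt X 0 n \<omega>) / real n) + r
        = gam * ((real n - Zsum X n \<omega>) / real n) + r"
      using cnt0[OF elim(2)] by (simp add: gam_def mult_ac)
    also have "\<dots> = gam - gam * Zsum X n \<omega> / real n + r" using nz by (simp add: field_simps)
    also have "\<dots> = 1 - G \<omega>" using gam_tau pqr by (simp add: G_def gg_def algebra_simps)
    finally show ?case using elim(1) by (simp add: I_def)
  qed
  have b: "(\<integral>\<omega>. h \<omega> * real_cond_exp M (F n) I \<omega> \<partial>M) = (\<integral>\<omega>. h \<omega> * (1 - G \<omega>) \<partial>M)"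
    by (rule integral_cong_AE[OF _ _ ae]) measurable
  have a: "(\<integral>\<omega>. h \<omega> * eps (n + 1) \<omega> \<partial>M) = (\<integral>\<omega>. h \<omega> * (1 - G \<omega>) - h \<omega> * I \<omega> \<partial>M)"
  proof (rule Bochner_Integration.integral_cong[OF refl])
    fix \<omega> assume w: "\<omega> \<in> space M"
    have "Y (n + 1) \<omega> = 1 - I \<omega>" using Y01[of "n + 1" \<omega>] w by (simp add: I_def)
    then show "h \<omega> * eps (n + 1) \<omega> = h \<omega> * (1 - G \<omega>) - h \<omega> * I \<omega>"
      unfolding eps_def G_def by (simp add: right_diff_distrib)
  qed
  show ?thesis unfolding a Bochner_Integration.integral_diff[OF int2 int1] using b c by simp
qed

lemma S_pow_eps: "j \<ge> 1 \<Longrightarrow> (\<integral>\<omega>. S n \<omega> ^ j * eps (Suc n) \<omega> \<partial>M) = 0"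
proof (cases "n = 0")
  case True
  assume "j \<ge> 1"
  then show ?thesis using True by (simp add: S_def)
next
  case False
  assume j: "j \<ge> 1"
  have [measurable]: "S n \<in> borel_measurable (F n)" by (rule S_F)
  have "(\<integral>\<omega>. S n \<omega> ^ j * eps (n + 1) \<omega> \<partial>M) = 0"
  proof (rule mart[where B="real n ^ j"])
    show "1 \<le> n" using False by simp
    show "(\<lambda>\<omega>. S n \<omega> ^ j) \<in> borel_measurable (F n)" by measurable
    fix \<omega> assume "\<omega> \<in> space M"
    then show "\<bar>S n \<omega> ^ j\<bar> \<le> real n ^ j" unfolding power_abs by (intro power_mono S_bound) auto
  qed
  then show ?thesis by simp
qed

lemma eps_Suc_M[measurable]: "eps (Suc n) \<in> borel_measurable M" by (rule eps_M) simp

lemma int_S_pow: "integrable M (\<lambda>\<omega>. S n \<omega> ^ j)"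
proof (rule bint[where B="real n ^ j"])
  fix \<omega> assume "\<omega> \<in> space M"
  then show "\<bar>S n \<omega> ^ j\<bar> \<le> real n ^ j" unfolding power_abs by (intro power_mono S_bound) auto
qed measurable

lemma int_S_pow_eps: "integrable M (\<lambda>\<omega>. S n \<omega> ^ j * eps (Suc n) \<omega>)"
proof (rule bint[where B="real n ^ j"])
  fix \<omega> assume w: "\<omega> \<in> space M"
  have "\<bar>S n \<omega> ^ j * eps (Suc n) \<omega>\<bar> \<le> real n ^ j * 1" unfolding abs_mult power_abs
    using eps_bound[of "Suc n" \<omega>] w by (intro mult_mono power_mono S_bound) auto
  then show "\<bar>S n \<omega> ^ j * eps (Suc n) \<omega>\<bar> \<le> real n ^ j" by simp
qed measurable

lemma E2: "(\<integral>\<omega>. S n \<omega> ^ 2 \<partial>M) \<le> real n"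
proof (induction n)
  case 0 then show ?case by (simp add: S_def)
next
  case (Suc n)
  have "(\<integral>\<omega>. S (Suc n) \<omega> ^ 2 \<partial>M) \<le> (\<integral>\<omega>. S n \<omega> ^ 2 + 2 * (S n \<omega> ^ 1 * eps (Suc n) \<omega>) + 1 \<partial>M)"
  proof (rule integral_mono)
    show "integrable M (\<lambda>\<omega>. S (Suc n) \<omega> ^ 2)" by (rule int_S_pow)
    show "integrable M (\<lambda>\<omega>. S n \<omega> ^ 2 + 2 * (S n \<omega> ^ 1 * eps (Suc n) \<omega>) + 1)"
      by (intro Bochner_Integration.integrable_add integrable_mult_right int_S_pow int_S_pow_eps integrable_const)
    fix \<omega> assume w: "\<omega> \<in> space M"
    have e: "(eps (Suc n) \<omega>)\<^sup>2 \<le> 1" using eps_bound[of "Suc n" \<omega>] w by (simp add: abs_square_le_1)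
    show "S (Suc n) \<omega> ^ 2 \<le> S n \<omega> ^ 2 + 2 * (S n \<omega> ^ 1 * eps (Suc n) \<omega>) + 1"
      unfolding S_Suc using e by (simp add: power2_sum)
  qed
  also have "\<dots> = (\<integral>\<omega>. S n \<omega> ^ 2 \<partial>M) + 2 * (\<integral>\<omega>. S n \<omega> ^ 1 * eps (Suc n) \<omega> \<partial>M) + 1"
    using int_S_pow[of n 2] int_S_pow_eps[of n 1] by (simp add: prob_space)
  also have "\<dots> \<le> real n + 1" using Suc S_pow_eps[of 1 n] by simp
  finally show ?case by simp
qed

lemma quartic: "\<bar>e\<bar> \<le> 1 \<Longrightarrow> (s + e) ^ 4 \<le> s ^ 4 + 4 * (s ^ 3 * e) + 8 * s ^ 2 + (3::real)"
proof -
  assume e: "\<bar>e\<bar> \<le> 1"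
  have e2: "e^2 \<le> 1" using e by (simp add: abs_square_le_1)
  have "(s + e) ^ 4 = s ^ 4 + 4 * (s ^ 3 * e) + 6 * s^2 * e^2 + 4 * s * e^3 + e^4" by algebra
  also have "6 * s^2 * e^2 \<le> 6 * s^2" using e2 by (simp add: mult_left_le)
  also have "4 * s * e^3 \<le> 2 * s^2 + 2"
  proof -
    have "\<bar>e^3\<bar> \<le> 1" unfolding power_abs by (rule power_le_one) (use e in auto)
    then have "4 * s * e^3 \<le> 4 * \<bar>s\<bar>"
      by (metis abs_ge_self abs_mult abs_of_nonneg mult_left_le norm_ge_zero real_norm_def order.trans mult.assoc mult_left_mono zero_le_numeral) 
    also have "\<dots> \<le> 2 * s^2 + 2" using sum_squares_ge_zero[of "\<bar>s\<bar> - 1" 0]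
      by (simp add: power2_eq_square algebra_simps)
    finally show ?thesis .
  qed
  also have "e^4 \<le> 1"
  proof -
    have "\<bar>e\<bar>^4 \<le> 1" by (rule power_le_one) (use e in auto)
    then show ?thesis by (simp add: power_abs[symmetric])
  qed
  finally show ?thesis by simp
qed

lemma E4: "(\<integral>\<omega>. S n \<omega> ^ 4 \<partial>M) \<le> 8 * real n ^ 2"
proof (induction n)
  case 0 then show ?case by (simp add: S_def)
next
  case (Suc n)
  have "(\<integral>\<omega>. S (Suc n) \<omega> ^ 4 \<partial>M) \<le> (\<integral>\<omega>. S n \<omega> ^ 4 + 4 * (S n \<omega> ^ 3 * eps (Suc n) \<omega>) + 8 * S n \<omega> ^ 2 + 3 \<partial>M)"
  proof (rule integral_mono)
    show "integrable M (\<lambda>\<omega>. S (Suc n) \<omega> ^ 4)" by (rule int_S_pow)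
    show "integrable M (\<lambda>\<omega>. S n \<omega> ^ 4 + 4 * (S n \<omega> ^ 3 * eps (Suc n) \<omega>) + 8 * S n \<omega> ^ 2 + 3)"
      by (intro Bochner_Integration.integrable_add integrable_mult_right int_S_pow int_S_pow_eps integrable_const)
    fix \<omega> assume w: "\<omega> \<in> space M"
    show "S (Suc n) \<omega> ^ 4 \<le> S n \<omega> ^ 4 + 4 * (S n \<omega> ^ 3 * eps (Suc n) \<omega>) + 8 * S n \<omega> ^ 2 + 3"
      unfolding S_Suc using eps_bound[of "Suc n" \<omega>] w by (intro quartic) auto
  qed
  also have "\<dots> = (\<integral>\<omega>. S n \<omega> ^ 4 \<partial>M) + 4 * (\<integral>\<omega>. S n \<omega> ^ 3 * eps (Suc n) \<omega> \<partial>M) + 8 * (\<integral>\<omega>. S n \<omega> ^ 2 \<partial>M) + 3"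
    using int_S_pow[of n 2] int_S_pow[of n 4] int_S_pow_eps[of n 3] by (simp add: prob_space)
  also have "\<dots> \<le> 8 * real n ^ 2 + 8 * real n + 3" using Suc S_pow_eps[of 3 n] E2[of n] by simp
  also have "\<dots> \<le> 8 * real (Suc n) ^ 2" by (simp add: power2_eq_square algebra_simps)
  finally show ?case .
qed

lemma AE_S: "AE \<omega> in M. eventually (\<lambda>n. S n \<omega> ^ 4 < real n powr (7/2)) sequentially"
proof -
  define A where "A n = {\<omega> \<in> space M. real n powr (7/2) \<le> S n \<omega> ^ 4}" for n
  have Am[measurable]: "A n \<in> sets M" for n unfolding A_def by measurable
  have "AE \<omega> in M. eventually (\<lambda>n. \<omega> \<in> space M - A n) sequentially"
  proof (rule borel_cantelli_AE1[OF Am])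
    fix n show "emeasure M (A n) < \<infinity>" by (simp add: emeasure_eq_measure)
  next
    show "summable (\<lambda>n. measure M (A n))"
    proof (rule summable_comparison_test'[where N=1])
      show "summable (\<lambda>n. 8 * real n powr (- 3/2))"
        by (intro summable_mult) (simp add: summable_real_powr_iff)
      fix n :: nat assume n: "n \<ge> 1"
      then have npos: "real n > 0" by simp
      have "measure M (A n) \<le> (\<integral>\<omega>. S n \<omega> ^ 4 \<partial>M) / real n powr (7/2)"
        unfolding A_def
        by (rule integral_Markov_inequality_measure[OF int_S_pow sets.top]) (use npos in auto)
      also have "\<dots> \<le> 8 * real n ^ 2 / real n powr (7/2)"
        using npos by (intro divide_right_mono E4) auto
      also have "\<dots> = 8 * real n powr (2 - 7/2)"
        using npos by (simp only: powr_diff[of "real n"] powr_numeral[of "real n"])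
      finally show "norm (measure M (A n)) \<le> 8 * real n powr (- 3/2)" by simp
    qed
  qed
  then show ?thesis
    by eventually_elim (auto elim!: eventually_mono simp: A_def)
qed

definition "Llim = tau / (1 - gam)"

lemma Z_rec:
  assumes n: "n \<ge> 1"
  shows "Zsum X (Suc n) \<omega> / real (Suc n) - Llim
    = (1 - (1 - gam) / (real n + 1)) * (Zsum X n \<omega> / real n - Llim) + eps (Suc n) \<omega> / real (Suc n)"
proof -
  have ZS: "Zsum X (Suc n) \<omega> = Zsum X n \<omega> + Y (Suc n) \<omega>" by (simp add: Zsum_def Y_def)
  have Ye: "Y (Suc n) \<omega> = eps (Suc n) \<omega> + gam * Zsum X n \<omega> / real n + tau" by (simp add: eps_def gg_def)
  have nz: "real n \<noteq> 0" "real n + 1 \<noteq> 0" "1 - gam \<noteq> 0" using n gam_tau by auto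
  define Z where "Z = Zsum X n \<omega>"
  define e where "e = eps (Suc n) \<omega>"
  have tauL: "tau = (1 - gam) * Llim" using nz by (simp add: Llim_def)
  have key: "Z + e + gam * Z / real n + tau - (real n + 1) * Llim = (real n + gam) * (Z / real n - Llim) + e"
    unfolding tauL using nz by (simp add: field_simps)
  have "Zsum X (Suc n) \<omega> / real (Suc n) - Llim = (Z + e + gam * Z / real n + tau - (real n + 1) * Llim) / (real n + 1)"
  proof -
    have "real (Suc n) = real n + 1" by simp
    moreover have "(A - (real n + 1) * Llim) / (real n + 1) = A / (real n + 1) - Llim" for A
      using nz(2) by (simp add: diff_divide_distrib)
    ultimately show ?thesis unfolding ZS Ye Z_def e_def by (simp add: add_ac)
  qed
  also have "\<dots> = ((real n + gam) * (Z / real n - Llim) + e) / (real n + 1)" by (simp only: key)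
  also have "\<dots> = (1 - (1 - gam) / (real n + 1)) * (Z / real n - Llim) + e / real (Suc n)"
  proof -
    have a: "(real n + gam) / (real n + 1) = 1 - (1 - gam) / (real n + 1)"
      using nz(2) by (simp add: field_simps)
    have "((real n + gam) * W + e) / (real n + 1) = ((real n + gam) / (real n + 1)) * W + e / (real n + 1)" for W
      by (simp add: divide_inverse algebra_simps)
    then show ?thesis unfolding a by simp
  qed
  finally show ?thesis by (simp add: Z_def e_def)
qed

lemma AE_conv: "AE \<omega> in M. (\<lambda>n. Zsum X n \<omega> / real n) \<longlonglongrightarrow> Llim"
  using AE_S
proof eventually_elim
  case (elim \<omega>)
  have "convergent (\<lambda>n. \<Sum>k=1..n. eps k \<omega> / real k)"
    by (rule eps_series_conv) (use elim in \<open>simp add: S_def\<close>)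
  then obtain P where P: "(\<lambda>n. \<Sum>k=1..n. eps k \<omega> / real k) \<longlonglongrightarrow> P" by (auto simp: convergent_def)
  have "(\<lambda>n. Zsum X n \<omega> / real n - Llim) \<longlonglongrightarrow> 0"
  proof (rule det_w[OF _ _ P, where c="1 - gam" and Nz=1])
    show "0 < 1 - gam" "1 - gam \<le> 1" using gam_tau by auto
    fix n :: nat assume "n \<ge> 1"
    then show "Zsum X (Suc n) \<omega> / real (Suc n) - Llim
      = (1 - (1 - gam) / (real n + 1)) * (Zsum X n \<omega> / real n - Llim) + eps (Suc n) \<omega> / real (Suc n)"
      by (rule Z_rec)
  qed
  then have "(\<lambda>n. (Zsum X n \<omega> / real n - Llim) + Llim) \<longlonglongrightarrow> 0 + Llim" by (intro tendsto_add tendsto_const)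
  then show ?case by simp
qed

end
theorem mainTheorem11:
  fixes M :: "'a measure" and X :: "nat \<Rightarrow> 'a \<Rightarrow> int"
    and p q r \<theta> :: real
  assumes "prob_space M"
    and "p \<ge> 0" "q \<ge> 0" "r \<ge> 0" "p + q + r = 1"
    and "0 \<le> \<theta>" "\<theta> < 1"
    and meas: "\<And>i. i \<ge> 1 \<Longrightarrow> X i \<in> M \<rightarrow>\<^sub>M count_space UNIV"
    and vals: "\<And>i \<omega>. i \<ge> 1 \<Longrightarrow> \<omega> \<in> space M \<Longrightarrow> X i \<omega> \<in> {-1, 0, 1}"
    and init: "measure M {\<omega> \<in> space M. X 1 \<omega> = 1} = p"
              "measure M {\<omega> \<in> space M. X 1 \<omega> = -1} = q"
              "measure M {\<omega> \<in> space M. X 1 \<omega> = 0} = r"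
    and step_plus: "\<And>n. n \<ge> 1 \<Longrightarrow> AE \<omega> in M.
        real_cond_exp M (nat_filtration M X n)
          (indicator {\<omega> \<in> space M. X (n + 1) \<omega> = 1}) \<omega>
        = \<theta> * (real (cnt X 1 n \<omega>) / real n * p + real (cnt X (-1) n \<omega>) / real n * q)
          + (1 - \<theta>) * p"
    and step_minus: "\<And>n. n \<ge> 1 \<Longrightarrow> AE \<omega> in M.
        real_cond_exp M (nat_filtration M X n)
          (indicator {\<omega> \<in> space M. X (n + 1) \<omega> = -1}) \<omega>
        = \<theta> * (real (cnt X (-1) n \<omega>) / real n * p + real (cnt X 1 n \<omega>) / real n * q)
          + (1 - \<theta>) * q"
    and step_zero: "\<And>n. n \<ge> 1 \<Longrightarrow> AE \<omega> in M.
        real_cond_exp M (nat_filtration M X n)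
          (indicator {\<omega> \<in> space M. X (n + 1) \<omega> = 0}) \<omega>
        = \<theta> * (p + q) * (real (cnt X 0 n \<omega>) / real n) + r"
  shows "(AE \<omega> in M. (\<lambda>n. (Zsum X n \<omega> - (\<integral>\<omega>. Zsum X n \<omega> \<partial>M)) / real n) \<longlonglongrightarrow> 0)
       \<and> (\<lambda>n. (\<integral>\<omega>. Zsum X n \<omega> \<partial>M) / real n)
            \<longlonglongrightarrow> ((1 - \<theta>) * (p + q)) / (1 - (p + q) * \<theta>)
       \<and> (AE \<omega> in M. (\<lambda>n. Zsum X n \<omega> / real n)
            \<longlonglongrightarrow> ((1 - \<theta>) * (p + q)) / (1 - (p + q) * \<theta>))"
proof -
  interpret E: eleph M X p q r \<theta>
    using assms by (intro eleph.intro eleph_axioms.intro) auto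
  have L: "E.Llim = ((1 - \<theta>) * (p + q)) / (1 - (p + q) * \<theta>)"
    by (simp add: E.Llim_def E.tau_def E.gam_def)
  have ae: "AE \<omega> in M. (\<lambda>n. Zsum X n \<omega> / real n) \<longlonglongrightarrow> E.Llim" by (rule E.AE_conv)
  have "(\<lambda>i. \<integral>\<omega>. Zsum X i \<omega> / real i \<partial>M) \<longlonglongrightarrow> (\<integral>\<omega>. E.Llim \<partial>M)"
  proof (rule integral_dominated_convergence[where w="\<lambda>_. 1"])
    show "(\<lambda>_. E.Llim) \<in> borel_measurable M" by simp
    show "\<And>i. (\<lambda>\<omega>. Zsum X i \<omega> / real i) \<in> borel_measurable M" by measurable
    show "integrable M (\<lambda>_. 1::real)" by simp
    show "AE \<omega> in M. (\<lambda>i. Zsum X i \<omega> / real i) \<longlonglongrightarrow> E.Llim" by (rule ae)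
    fix i show "AE \<omega> in M. norm (Zsum X i \<omega> / real i) \<le> 1"
    proof (rule AE_I2)
      fix \<omega> assume "\<omega> \<in> space M"
      then show "norm (Zsum X i \<omega> / real i) \<le> 1" using E.Z_bounds[of \<omega> i] by (auto simp: divide_simps)
    qed
  qed
  then have ex: "(\<lambda>n. (\<integral>\<omega>. Zsum X n \<omega> \<partial>M) / real n) \<longlonglongrightarrow> E.Llim" by (simp add: E.prob_space)
  have ae2: "AE \<omega> in M. (\<lambda>n. (Zsum X n \<omega> - (\<integral>\<omega>. Zsum X n \<omega> \<partial>M)) / real n) \<longlonglongrightarrow> 0"
    using ae
  proof eventually_elim
    case (elim \<omega>)
    have "(\<lambda>n. Zsum X n \<omega> / real n - (\<integral>\<omega>. Zsum X n \<omega> \<partial>M) / real n) \<longlonglongrightarrow> E.Llim - E.Llim"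
      by (intro tendsto_diff elim ex)
    then show ?case by (simp add: diff_divide_distrib)
  qed
  show ?thesis using ae2 ex ae unfolding L by simp
qed

end
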